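(* Assume (a) and (b). Writing $P^\star=P^{(Q,\lambda)}_{\Theta|Z=z}$, the following hold: $$R_z(P^\star)+\lambda D_f(P^\star\|Q)=-\lambda\int f^*\Big(-\frac{L_z(\theta)+N_{Q,z}(\lambda)}{\lambda}\Big)dQ(\theta)-N_{Q,z}(\lambda),$$ and $$R_z(Q)+\lambda\int f\Big(\frac{dP^\star}{dQ}(\theta)\Big)\frac{dQ}{dP^\star}(\theta)\,dQ(\theta)=-\lambda\int f^*\Big(-\frac{L_z(\theta)+N_{Q,z}(\lambda)}{\lambda}\Big)\frac{dQ}{dP^\star}(\theta)\,dQ(\theta)-N_{Q,z}(\lambda).$$
   Context: Setting. - $\mathcal{M}\subseteq\mathbb{R}^d$; $h:\mathcal{M}\times\mathcal{X}\to\mathcal{Y}$; the loss $\ell:\mathcal{Y}\times\mathcal{Y}\to[0,\infty)$ satisfies $\ell(y,y)=0$. - For a dataset $z=((x_1,y_1),\dots,(x_n,y_n))$, $L_z(\theta)=\frac1n\sum_i\ell(h(\theta,x_i),y_i)$ and $R_z(P)=\int L_z\,dP$. - $Q$ is a Borel probability measure on $\mathcal{M}$, and $\triangle_Q(\mathcal{M})$ is the set of probability measures $P\ll Q$. Fix $\lambda>0$. - $f:[0,\infty)\to\mathbb{R}$ is convex with $f(1)=0$; $D_f(P\|Q)=\int f(\frac{dP}{dQ})dQ$. - $\dot f$ is the derivative of $f$ on $(0,\infty)$ and $\dot f^{-1}$ its inverse. - $f^*(t)=\sup_x(tx-f(x))$ is the Legendre–Fenchel transform. Assumptions. - (a) $f$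 is strictly convex and differentiable. - (b) There exists $\beta$ with $\dot f^{-1}\big(-\frac{\beta+L_z(\theta)}{\lambda}\big)>0$ on $\operatorname{supp}Q$ and $\int\dot f^{-1}\big(-\frac{\beta+L_z(\theta)}{\lambda}\big)dQ=1$. Normalization and solution. $N_{Q,z}(\lambda)$ denotes this $\beta$. $P^{(Q,\lambda)}_{\Theta|Z=z}$ is the unique minimizer of $R_z(P)+\lambda D_f(P\|Q)$ over $\triangle_Q(\mathcal{M})$, with density $\frac{dP^{(Q,\lambda)}_{\Theta|Z=z}}{dQ}(\theta)=\dot f^{-1}\big(-\frac{N_{Q,z}(\lambda)+L_z(\theta)}{\lambda}\big)$ on $\operatorname{supp}Q$; it is mutually absolutely continuous with $Q$. *)

theory Defs
  imports "HOL-Analysis.Analysis" "HOL-Probability.Probability"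
begin

definition Lz :: "('p \<Rightarrow> 'x \<Rightarrow> 'y) \<Rightarrow> ('y \<Rightarrow> 'y \<Rightarrow> real) \<Rightarrow> ('x \<times> 'y) list \<Rightarrow> 'p \<Rightarrow> real" where
  "Lz h l z \<theta> = (\<Sum>(x, y)\<leftarrow>z. l (h \<theta> x) y) / real (length z)"

definition Rz :: "('p \<Rightarrow> 'x \<Rightarrow> 'y) \<Rightarrow> ('y \<Rightarrow> 'y \<Rightarrow> real) \<Rightarrow> ('x \<times> 'y) list \<Rightarrow> 'p measure \<Rightarrow> real" where
  "Rz h l z P = (\<integral>\<theta>. Lz h l z \<theta> \<partial>P)"

definition fdiv :: "(real \<Rightarrow> real) \<Rightarrow> 'p measure \<Rightarrow> 'p measure \<Rightarrow> real" where
  "fdiv f P Q = (\<integral>\<theta>. f (enn2real (RN_deriv Q P \<theta>)) \<partial>Q)"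

definition strictly_convex_on :: "real set \<Rightarrow> (real \<Rightarrow> real) \<Rightarrow> bool" where
  "strictly_convex_on S f \<longleftrightarrow> (\<forall>x\<in>S. \<forall>y\<in>S. \<forall>u::real. x \<noteq> y \<and> 0 < u \<and> u < 1 \<longrightarrow>
      f (u * x + (1 - u) * y) < u * f x + (1 - u) * f y)"

definition fconj :: "(real \<Rightarrow> real) \<Rightarrow> real \<Rightarrow> real" where
  "fconj f t = (SUP x\<in>{0..}. t * x - f x)"

definition fdot_inv :: "(real \<Rightarrow> real) \<Rightarrow> real \<Rightarrow> real" where
  "fdot_inv f y = inv_into {0<..} (deriv f) y"

definition msupp :: "'p::topological_space measure \<Rightarrow> 'p set" where
  "msupp Q = {\<theta> \<in> space Q. \<forall>U. open U \<and> \<theta> \<in> U \<longrightarrow> emeasure Q (U \<inter> space Q) > 0}"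

text \<open>Density of the solution w.r.t. Q (given on supp Q; set to 0 on the Q-null complement).\<close>
definition gibbs_density :: "(real \<Rightarrow> real) \<Rightarrow> real \<Rightarrow> real \<Rightarrow> ('p \<Rightarrow> real) \<Rightarrow> 'p::topological_space measure \<Rightarrow> 'p \<Rightarrow> real" where
  "gibbs_density f lam \<beta> L Q \<theta> = (if \<theta> \<in> msupp Q then fdot_inv f (- (\<beta> + L \<theta>) / lam) else 0)"

end

theory Submission
  imports Defs
begin


lemma downset_borel:
  fixes D :: "real set"
  assumes down: "\<And>s s'. s \<le> s' \<Longrightarrow> s' \<in> D \<Longrightarrow> s \<in> D"
  shows "D \<in> sets borel"
proof (cases "D = {}")
  case True then show ?thesis by simp
next
  case ne: False
  show ?thesis
  proof (cases "bdd_above D")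
    case False
    have "x \<in> D" for x
    proof -
      from False obtain d where "d \<in> D" "\<not> d \<le> x" unfolding bdd_above_def by auto
      then show ?thesis using down[of x d] by auto
    qed
    then have "D = UNIV" by auto
    then show ?thesis by simp
  next
    case True
    define a where "a = Sup D"
    have "D = {..<a} \<union> (D \<inter> {a})"
    proof (intro equalityI subsetI)
      fix s assume "s \<in> D"
      then have "s \<le> a" using cSup_upper[OF \<open>s \<in> D\<close> True] a_def by auto
      then show "s \<in> {..<a} \<union> (D \<inter> {a})" using \<open>s \<in> D\<close> by auto
    next
      fix s assume "s \<in> {..<a} \<union> (D \<inter> {a})"
      moreover have "s \<in> D" if "s < a"
      proof -
        obtain d where "d \<in> D" "s < d" using less_cSup_iff[OF ne True] a_def \<open>s < a\<close> by auto
        then show "s \<in> D" using down[of s d] by simp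
      qed
      ultimately show "s \<in> D" by auto
    qed
    moreover have "D \<inter> {a} \<in> sets borel"
      by (cases "a \<in> D") auto
    ultimately show ?thesis by (metis sets.Un borel_open open_lessThan)
  qed
qed

lemma fconj_borel: "fconj f \<in> borel_measurable borel"
proof -
  define D where "D = {s. bdd_above ((\<lambda>x. s*x - f x) ` {0::real..})}"
  have down: "s \<in> D" if "s \<le> s'" "s' \<in> D" for s s'
  proof -
    from that obtain b where b: "\<And>x. x \<ge> 0 \<Longrightarrow> s'*x - f x \<le> b" unfolding D_def bdd_above_def by auto
    have "s*x - f x \<le> b" if "x \<ge> 0" for x
      using b[OF that] mult_right_mono[OF \<open>s \<le> s'\<close> that] by linarith
    then show ?thesis unfolding D_def bdd_above_def by auto
  qed
  have Dm: "D \<in> sets borel" by (rule downset_borel) (use down in blast)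
  have monoD: "mono_on D (fconj f)"
  proof (rule mono_onI)
    fix s s' assume "s \<in> D" "s' \<in> D" "s \<le> s'"
    show "fconj f s \<le> fconj f s'" unfolding fconj_def
    proof (rule cSup_least)
      show "(\<lambda>x. s*x - f x) ` {0..} \<noteq> {}" by auto
    next
      fix y assume "y \<in> (\<lambda>x. s*x - f x) ` {0..}"
      then obtain x where x: "x \<ge> 0" "y = s*x - f x" by auto
      have "s*x - f x \<le> s'*x - f x" using mult_right_mono[OF \<open>s \<le> s'\<close> x(1)] by linarith
      also have "\<dots> \<le> (SUP x\<in>{0..}. s'*x - f x)"
        using \<open>s' \<in> D\<close> x(1) unfolding D_def by (intro cSUP_upper) auto
      finally show "y \<le> (SUP x\<in>{0..}. s'*x - f x)" using x by simp
    qed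
  qed
  have const: "fconj f s = fconj f s'" if "s \<notin> D" "s' \<notin> D" for s s'
  proof -
    have H: "Sup X = (LEAST z::real. False)" if "\<not> bdd_above X" for X :: "real set"
    proof -
      have "(\<lambda>z. \<forall>x\<in>X. x \<le> z) = (\<lambda>z. False)" using that unfolding bdd_above_def by (metis not_le)
      then show ?thesis unfolding Sup_real_def by simp
    qed
    have A: "\<not> bdd_above ((\<lambda>x. s*x - f x) ` {0::real..})" using that(1) unfolding D_def by simp
    have B: "\<not> bdd_above ((\<lambda>x. s'*x - f x) ` {0::real..})" using that(2) unfolding D_def by simp
    show ?thesis unfolding fconj_def by (rule trans[OF H[OF A] H[OF B, symmetric]])
  qed
  have monoN: "mono_on (-D) (fconj f)"
  proof (rule mono_onI)
    fix s s' assume "s \<in> -D" "s' \<in> -D"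
    then show "fconj f s \<le> fconj f s'" using const[of s s'] by simp
  qed
  show ?thesis
  proof (rule borel_measurable_piecewise_mono[of "{D, -D}"])
    show "countable {D, - D}" by simp
    show "\<Union>{D, - D} = UNIV" by blast
    fix c assume "c \<in> {D, -D}"
    then have c: "c = D \<or> c = -D" by blast
    then show "c \<in> sets borel" using Dm by (metis borel_comp)
    show "mono_on c (fconj f)" using c monoD monoN by metis
  qed
qed

lemma fconj_at:
  fixes f :: "real \<Rightarrow> real"
  assumes cvx: "convex_on {0..} f" and x: "x > 0" and d: "f differentiable (at x)"
  shows "fconj f (deriv f x) = deriv f x * x - f x"
proof -
  have D: "(f has_field_derivative deriv f x) (at x within {0..})"
    using d DERIV_deriv_iff_real_differentiable has_field_derivative_at_within by blast
  have le: "deriv f x * y - f y \<le> deriv f x * x - f x" if "y \<ge> 0" for y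
  proof -
    have "f y - f x \<ge> deriv f x * (y - x)"
      by (rule convex_on_imp_above_tangent[OF cvx _ _ _ D]) (use x that in auto)
    then show ?thesis by (simp add: algebra_simps)
  qed
  show ?thesis unfolding fconj_def
    by (rule cSup_eq_maximum) (use x le in auto)
qed

lemma AE_msupp:
  fixes Q :: "'a::second_countable_topology measure"
  assumes Q_sets: "sets Q = sets (restrict_space borel M)"
  shows "AE \<theta> in Q. \<theta> \<in> msupp Q"
proof -
  have spQ: "space Q = M" using sets_eq_imp_space_eq[OF Q_sets] by (simp add: space_restrict_space)
  define F where "F = {U. open U \<and> emeasure Q (U \<inter> space Q) = 0}"
  obtain F' where F': "F' \<subseteq> F" "countable F'" "\<Union>F' = \<Union>F"
    using Lindelof[of F] unfolding F_def by auto
  have meas: "U \<inter> space Q \<in> sets Q" if "open U" for U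
    using that unfolding Q_sets sets_restrict_space spQ by auto
  have that: "AE \<theta> in Q. \<theta> \<notin> U" if "U \<in> F'" for U
  proof -
    have "U \<in> F" using that F' by auto
    then have "open U" "emeasure Q (U \<inter> space Q) = 0" unfolding F_def by auto
    then show ?thesis
      using meas[OF \<open>open U\<close>] by (intro AE_I[of _ _ "U \<inter> space Q"]) auto
  qed
  then have "AE \<theta> in Q. \<forall>U\<in>F'. \<theta> \<notin> U"
    by (subst AE_ball_countable[OF F'(2)]) (use that in blast)
  then show ?thesis
  proof (rule AE_mp[OF _ AE_I2], intro impI)
    fix \<theta> assume th: "\<theta> \<in> space Q" and nU: "\<forall>U\<in>F'. \<theta> \<notin> U"
    then have "\<theta> \<notin> \<Union>F" using F'(3) by auto
    then show "\<theta> \<in> msupp Q" unfolding msupp_def F_def using th by (auto simp: zero_less_iff_neq_zero)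
  qed
qed



theorem theorem8:
  fixes M :: "'a::euclidean_space set" and Q :: "'a measure"
    and h :: "'a \<Rightarrow> 'x \<Rightarrow> 'y" and l :: "'y \<Rightarrow> 'y \<Rightarrow> real" and z :: "('x \<times> 'y) list"
    and f :: "real \<Rightarrow> real" and lam \<beta> :: real
  defines "g \<equiv> gibbs_density f lam \<beta> (Lz h l z) Q"
  defines "Pstar \<equiv> density Q (\<lambda>\<theta>. ennreal (g \<theta>))"
  assumes loss_nonneg: "\<forall>u v. l u v \<ge> 0"
    and loss_diag: "\<forall>y. l y y = 0"
    and Q_sets: "sets Q = sets (restrict_space borel M)"
    and Q_prob: "prob_space Q"
    and L_meas: "Lz h l z \<in> borel_measurable Q"
    and lam_pos: "lam > 0"
    and f_convex: "convex_on {0..} f"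
    and f_one: "f 1 = 0"
    and f_strict: "strictly_convex_on {0..} f"
    and f_diff: "\<forall>x>0. f differentiable (at x)"
    and b_range: "\<forall>\<theta>\<in>msupp Q. - (\<beta> + Lz h l z \<theta>) / lam \<in> deriv f ` {0<..}"
    and b_norm: "(\<integral>\<theta>. g \<theta> \<partial>Q) = 1"
  shows "((integrable Pstar (Lz h l z) \<and> integrable Q (\<lambda>\<theta>. f (enn2real (RN_deriv Q Pstar \<theta>)))) \<longrightarrow>
           Rz h l z Pstar + lam * fdiv f Pstar Q
             = - lam * (\<integral>\<theta>. fconj f (- (Lz h l z \<theta> + \<beta>) / lam) \<partial>Q) - \<beta>)
         \<and> ((integrable Q (Lz h l z) \<and> integrable Q (\<lambda>\<theta>. f (g \<theta>) * (1 / g \<theta>))) \<longrightarrow>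
           Rz h l z Q + lam * (\<integral>\<theta>. f (g \<theta>) * (1 / g \<theta>) \<partial>Q)
             = - lam * (\<integral>\<theta>. fconj f (- (Lz h l z \<theta> + \<beta>) / lam) * (1 / g \<theta>) \<partial>Q) - \<beta>)"
proof -
  let ?L = "Lz h l z"
  define t where "t \<theta> = - (\<beta> + ?L \<theta>) / lam" for \<theta>
  interpret Q: prob_space Q by (rule Q_prob)
  have Lm[measurable]: "?L \<in> borel_measurable Q" by (rule L_meas)
  have g_int: "integrable Q g" using b_norm not_integrable_integral_eq by force
  have g_meas[measurable]: "g \<in> borel_measurable Q" using g_int by auto
  have pt: "g \<theta> > 0 \<and> deriv f (g \<theta>) = t \<theta>" if "\<theta> \<in> msupp Q" for \<theta>
  proof -
    have "t \<theta> \<in> deriv f ` {0<..}" using b_range that t_def by auto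
    then have "fdot_inv f (t \<theta>) \<in> {0<..}" "deriv f (fdot_inv f (t \<theta>)) = t \<theta>"
      unfolding fdot_inv_def by (rule inv_into_into, rule f_inv_into_f)
    moreover have "g \<theta> = fdot_inv f (t \<theta>)" using that unfolding g_def gibbs_density_def t_def by simp
    ultimately show ?thesis by auto
  qed
  have g_nn: "g \<theta> \<ge> 0" for \<theta>
  proof (cases "\<theta> \<in> msupp Q")
    case True then show ?thesis using pt[OF True] by simp
  next
    case False then show ?thesis unfolding g_def gibbs_density_def by simp
  qed
  have conj: "fconj f (- (?L \<theta> + \<beta>) / lam) = t \<theta> * g \<theta> - f (g \<theta>)" if "\<theta> \<in> msupp Q" for \<theta>
  proof -
    have "fconj f (deriv f (g \<theta>)) = deriv f (g \<theta>) * g \<theta> - f (g \<theta>)"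
      using fconj_at[OF f_convex, of "g \<theta>"] pt[OF that] f_diff by auto
    moreover have "- (?L \<theta> + \<beta>) / lam = t \<theta>" unfolding t_def by (simp add: add.commute)
    ultimately show ?thesis using pt[OF that] by simp
  qed
  have AEs: "AE \<theta> in Q. \<theta> \<in> msupp Q" by (rule AE_msupp[OF Q_sets])
  have tm: "(\<lambda>\<theta>. - (?L \<theta> + \<beta>) / lam) \<in> borel_measurable Q" by measurable
  have conj_meas[measurable]: "(\<lambda>\<theta>. fconj f (- (?L \<theta> + \<beta>) / lam)) \<in> borel_measurable Q"
    by (rule measurable_compose[OF tm fconj_borel])
  have P1: "(integrable Pstar ?L \<and> integrable Q (\<lambda>\<theta>. f (enn2real (RN_deriv Q Pstar \<theta>)))) \<longrightarrow>
           Rz h l z Pstar + lam * fdiv f Pstar Q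
             = - lam * (\<integral>\<theta>. fconj f (- (?L \<theta> + \<beta>) / lam) \<partial>Q) - \<beta>"
  proof
    assume A: "integrable Pstar ?L \<and> integrable Q (\<lambda>\<theta>. f (enn2real (RN_deriv Q Pstar \<theta>)))"
    define r where "r \<theta> = enn2real (RN_deriv Q Pstar \<theta>)" for \<theta>
    have "AE \<theta> in Q. ennreal (g \<theta>) = RN_deriv Q Pstar \<theta>"
      using Q.RN_deriv_unique[of "\<lambda>\<theta>. ennreal (g \<theta>)" Pstar] Pstar_def by auto
    then have AEr: "AE \<theta> in Q. r \<theta> = g \<theta>"
      by eventually_elim (metis r_def g_nn enn2real_ennreal)
    have intgL: "integrable Q (\<lambda>\<theta>. g \<theta> * ?L \<theta>)"
      using A integrable_density[of ?L Q g] g_nn Pstar_def by simp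
    have intfr: "integrable Q (\<lambda>\<theta>. f (r \<theta>))" using A r_def by simp
    then have [measurable]: "(\<lambda>\<theta>. f (r \<theta>)) \<in> borel_measurable Q" by auto
    have R1: "Rz h l z Pstar = (\<integral>\<theta>. g \<theta> * ?L \<theta> \<partial>Q)"
      unfolding Rz_def Pstar_def by (simp add: integral_density g_nn)
    have F1: "fdiv f Pstar Q = (\<integral>\<theta>. f (r \<theta>) \<partial>Q)" unfolding fdiv_def r_def ..
    have "(\<integral>\<theta>. fconj f (- (?L \<theta> + \<beta>) / lam) \<partial>Q)
        = (\<integral>\<theta>. (- (1/lam)) * (g \<theta> * ?L \<theta>) + (- (\<beta>/lam)) * g \<theta> - f (r \<theta>) \<partial>Q)"
    proof (rule integral_cong_AE)
      show "AE \<theta> in Q. fconj f (- (?L \<theta> + \<beta>) / lam)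
          = (- (1/lam)) * (g \<theta> * ?L \<theta>) + (- (\<beta>/lam)) * g \<theta> - f (r \<theta>)"
        using AEs AEr
      proof eventually_elim
        case (elim \<theta>)
        then show ?case using conj[OF elim(1)] lam_pos unfolding t_def by (simp add: field_simps)
      qed
    qed measurable
    also have "\<dots> = (- (1/lam)) * (\<integral>\<theta>. g \<theta> * ?L \<theta> \<partial>Q) + (- (\<beta>/lam)) * (\<integral>\<theta>. g \<theta> \<partial>Q)
        - (\<integral>\<theta>. f (r \<theta>) \<partial>Q)"
      using intgL g_int intfr by (simp add: integral_diff integral_add)
    finally have "(\<integral>\<theta>. fconj f (- (?L \<theta> + \<beta>) / lam) \<partial>Q)
        = (- (1/lam)) * (\<integral>\<theta>. g \<theta> * ?L \<theta> \<partial>Q) - \<beta>/lam - (\<integral>\<theta>. f (r \<theta>) \<partial>Q)"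
      using b_norm by simp
    then show "Rz h l z Pstar + lam * fdiv f Pstar Q
             = - lam * (\<integral>\<theta>. fconj f (- (?L \<theta> + \<beta>) / lam) \<partial>Q) - \<beta>"
      using R1 F1 lam_pos by (simp add: field_simps)
  qed
  have P2: "(integrable Q ?L \<and> integrable Q (\<lambda>\<theta>. f (g \<theta>) * (1 / g \<theta>))) \<longrightarrow>
           Rz h l z Q + lam * (\<integral>\<theta>. f (g \<theta>) * (1 / g \<theta>) \<partial>Q)
             = - lam * (\<integral>\<theta>. fconj f (- (?L \<theta> + \<beta>) / lam) * (1 / g \<theta>) \<partial>Q) - \<beta>"
  proof
    assume A: "integrable Q ?L \<and> integrable Q (\<lambda>\<theta>. f (g \<theta>) * (1 / g \<theta>))"
    then have [measurable]: "(\<lambda>\<theta>. f (g \<theta>) * (1 / g \<theta>)) \<in> borel_measurable Q" by auto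
    have "(\<integral>\<theta>. fconj f (- (?L \<theta> + \<beta>) / lam) * (1 / g \<theta>) \<partial>Q)
        = (\<integral>\<theta>. (- (1/lam)) * ?L \<theta> + (- (\<beta>/lam)) - f (g \<theta>) * (1 / g \<theta>) \<partial>Q)"
    proof (rule integral_cong_AE)
      show "AE \<theta> in Q. fconj f (- (?L \<theta> + \<beta>) / lam) * (1 / g \<theta>)
          = (- (1/lam)) * ?L \<theta> + (- (\<beta>/lam)) - f (g \<theta>) * (1 / g \<theta>)"
        using AEs
      proof eventually_elim
        case (elim \<theta>)
        then show ?case using conj[OF elim(1)] pt[OF elim(1)] lam_pos unfolding t_def
          by (simp add: field_simps)
      qed
    qed measurable
    also have "\<dots> = (- (1/lam)) * (\<integral>\<theta>. ?L \<theta> \<partial>Q) + (- (\<beta>/lam))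
        - (\<integral>\<theta>. f (g \<theta>) * (1 / g \<theta>) \<partial>Q)"
      using A by (simp add: integral_diff integral_add Q.prob_space)
    finally show "Rz h l z Q + lam * (\<integral>\<theta>. f (g \<theta>) * (1 / g \<theta>) \<partial>Q)
             = - lam * (\<integral>\<theta>. fconj f (- (?L \<theta> + \<beta>) / lam) * (1 / g \<theta>) \<partial>Q) - \<beta>"
      unfolding Rz_def using lam_pos by (simp add: field_simps)
  qed
  show ?thesis using P1 P2 by blast
qed

end
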